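(* Let $(\tilde S,\tilde f)$ and $(\tilde T,\tilde g)$ be lifted partial permutations with corresponding Heegaard states $\mathbf x$ and $\mathbf y$, and suppose there is $\phi\in D(\mathbf x,\mathbf y)$. Then for each $i=1,\dots,m$, the local multiplicity of $\phi$ at $O_i$ equals $w_i(\tilde f)-w_i(\tilde g)$.
   Context: Fix integers $0<k<m$. $G_m$ is the group of isometries of $\mathbb R$ generated by $x\mapsto 1-x$ and $x\mapsto 2m-1-x$; $Q_1:\mathbb Z\to\mathbb Z/G_m\cong\{1,\dots,m-1\}$; $Q_2:\frac12+\mathbb Z\to\{1,\dots,m\}$ sends $j-\frac12$ to the unique $i\in\{1,\dots,m\}$ with $i\equiv j$ or $i\equiv 2-j\pmod{2m-2}$. A lifted partial permutation on $k$ letters is a pair $(\tilde S,\tilde f)$ with $\tilde S\subset\mathbb Z$ $G_m$-invariant, $|\tilde S/G_m|=k$, $\tilde f:\tilde S\to\mathbb Z$ $G_m$-equivariant with injective induced map $\tilde S/G_m\to\mathbb Z/G_m$. Weight: $w_j(\tilde f)=\tfrac12\#\{i\in\tilde S: i<j-\tfrac12<\tilde f(i)\text{ or } i>j-\tfrac12>\tilde f(i)\}$. In $\mathbb R^2$ take vertical lines $\tilde\alpha_i=\{i\}\times\mathbb R$, horizontal lines $\tilde\beta_i=\mathbb R\times\{i\}$, and punctures at $(\frac12+i,\frac12+i)$ labeled $O_{Q_2(\frac12+i)}$; $\mathbb G_m$ is generated by the $180^\circ$ rotations about $(\frac12,\frac12)$ and $(m-\frac12,m-\frac12)$; $\mathcal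 H=\mathbb R^2/\mathbb G_m$ with marked points $O_1,\dots,O_m$ ($O_1,O_m$ the orbifold points), and $\alpha_i,\beta_i$ the images of $\tilde\alpha_j,\tilde\beta_j$ with $Q_1(j)=i$. Heegaard states: $k$ points on $\alpha_i\cap\beta_j$'s using distinct $\alpha$'s and $\beta$'s; $(\tilde S,\tilde f)$ corresponds to the image of its graph. Two-chains assign integers to components of $\mathcal H\setminus(\boldsymbol\alpha\cup\boldsymbol\beta)$; $D(\mathbf x,\mathbf y)$ is the set of two-chains with initial corners exactly at $\mathbf x\setminus\mathbf y$ and terminal corners exactly at $\mathbf y\setminus\mathbf x$ (a point with quadrant multiplicities $A,B,C,D$, $A,D$ opposite, is initial if $B+C=A+D+1$, terminal if $B+C=A+D-1$, non-corner if $A+D=B+C$). The local multiplicity at $O_i$ is the multiplicity of the region containing $O_i$. *)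

theory Defs
  imports Main "HOL.Real"
begin

text \<open>The group G_m of isometries of the real line generated by the reflections
  x |-> 1 - x and x |-> 2m - 1 - x (both are involutions, so closing the identity
  under left composition with the generators gives the generated group).\<close>
inductive_set Gm :: "nat \<Rightarrow> (real \<Rightarrow> real) set" for m :: nat where
  Gm_id: "id \<in> Gm m"
| Gm_r1: "g \<in> Gm m \<Longrightarrow> (\<lambda>x. 1 - x) \<circ> g \<in> Gm m"
| Gm_r2: "g \<in> Gm m \<Longrightarrow> (\<lambda>x. 2 * real m - 1 - x) \<circ> g \<in> Gm m"

inductive_set GGm :: "nat \<Rightarrow> (real \<times> real \<Rightarrow> real \<times> real) set" for m :: nat where
  GGm_id: "id \<in> GGm m"
| GGm_r1: "g \<in> GGm m \<Longrightarrow> (\<lambda>(x, y). (1 - x, 1 - y)) \<circ> g \<in> GGm m"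
| GGm_r2: "g \<in> GGm m \<Longrightarrow>
     (\<lambda>(x, y). (2 * real m - 1 - x, 2 * real m - 1 - y)) \<circ> g \<in> GGm m"

definition int_orbit :: "nat \<Rightarrow> int \<Rightarrow> int set" where
  "int_orbit m i = {j. \<exists>g \<in> Gm m. real_of_int j = g (real_of_int i)}"

text \<open>Lifted partial permutation (S, f) on k letters.  The function f is only
  relevant on S.\<close>
definition lifted_pp :: "nat \<Rightarrow> nat \<Rightarrow> int set \<Rightarrow> (int \<Rightarrow> int) \<Rightarrow> bool" where
  "lifted_pp m k S f \<longleftrightarrow>
     (\<forall>g \<in> Gm m. g ` (real_of_int ` S) \<subseteq> real_of_int ` S) \<and>
     card (int_orbit m ` S) = k \<and>
     (\<forall>g \<in> Gm m. \<forall>i \<in> S. \<forall>j \<in> S.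
        real_of_int j = g (real_of_int i) \<longrightarrow> real_of_int (f j) = g (real_of_int (f i))) \<and>
     (\<forall>i \<in> S. \<forall>j \<in> S. int_orbit m (f i) = int_orbit m (f j) \<longrightarrow> int_orbit m i = int_orbit m j)"

definition weight :: "int set \<Rightarrow> (int \<Rightarrow> int) \<Rightarrow> int \<Rightarrow> real" where
  "weight S f j = (1/2) * real (card {i \<in> S.
      (real_of_int i < real_of_int j - 1/2 \<and> real_of_int j - 1/2 < real_of_int (f i)) \<or>
      (real_of_int i > real_of_int j - 1/2 \<and> real_of_int j - 1/2 > real_of_int (f i))})"

text \<open>Points of the Heegaard surface H = R^2 / GG_m are represented by GG_m-orbits.\<close>
definition pt_orbit :: "nat \<Rightarrow> real \<times> real \<Rightarrow> (real \<times> real) set" where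
  "pt_orbit m p = {q. \<exists>g \<in> GGm m. q = g p}"

definition heegaard_state :: "nat \<Rightarrow> int set \<Rightarrow> (int \<Rightarrow> int) \<Rightarrow> (real \<times> real) set set" where
  "heegaard_state m S f = {pt_orbit m (real_of_int i, real_of_int (f i)) | i. i \<in> S}"

text \<open>Components of H minus the alpha and beta curves: images of the open unit
  squares of R^2 minus the integer lines, each represented by the orbit of its centre.\<close>
definition regions :: "nat \<Rightarrow> (real \<times> real) set set" where
  "regions m = {pt_orbit m (real_of_int a + 1/2, real_of_int b + 1/2) | a b. True}"

text \<open>For an
  intersection point (image of the lattice point (a,b)) the quadrant multiplicities are
  A (upper right), D (lower left, opposite to A), B (upper left), C (lower right).
  D(x,y): initial corners exactly at x - y, terminal corners exactly at y - x,
  all other intersection points are non-corners.\<close>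
definition domains :: "nat \<Rightarrow> (real \<times> real) set set \<Rightarrow> (real \<times> real) set set
    \<Rightarrow> ((real \<times> real) set \<Rightarrow> int) set" where
  "domains m x y = {\<phi>. finite {R \<in> regions m. \<phi> R \<noteq> 0} \<and>
     (\<forall>a b :: int.
        let P = pt_orbit m (real_of_int a, real_of_int b);
            A = \<phi> (pt_orbit m (real_of_int a + 1/2, real_of_int b + 1/2));
            D = \<phi> (pt_orbit m (real_of_int a - 1/2, real_of_int b - 1/2));
            B = \<phi> (pt_orbit m (real_of_int a - 1/2, real_of_int b + 1/2));
            C = \<phi> (pt_orbit m (real_of_int a + 1/2, real_of_int b - 1/2))
        in (if P \<in> x - y then B + C = A + D + 1
            else if P \<in> y - x then B + C = A + D - 1
            else A + D = B + C))}"

text \<open>Local multiplicity at O_i: the region containing the puncture at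
  (i - 1/2, i - 1/2), which is labelled O_(Q_2(i - 1/2)) = O_i for 1 <= i <= m.\<close>
definition local_mult :: "nat \<Rightarrow> ((real \<times> real) set \<Rightarrow> int) \<Rightarrow> nat \<Rightarrow> int" where
  "local_mult m \<phi> i = \<phi> (pt_orbit m (real i - 1/2, real i - 1/2))"

end

theory Submission imports Defs begin

lemma Gm_form: "h \<in> Gm m \<Longrightarrow> \<exists>s t. (s = 1 \<or> s = -1) \<and> (\<forall>x. h x = s * x + t)"
proof (induction rule: Gm.induct)
  case Gm_id thus ?case by (intro exI[of _ 1] exI[of _ 0]) simp
next
  case (Gm_r1 g)
  then obtain s t where "s = 1 \<or> s = -1" "\<forall>x. g x = s*x + t" by blast
  thus ?case by (intro exI[of _ "-s"] exI[of _ "1 - t"]) auto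
next
  case (Gm_r2 g)
  then obtain s t where "s = 1 \<or> s = -1" "\<forall>x. g x = s*x + t" by blast
  thus ?case by (intro exI[of _ "-s"] exI[of _ "2 * real m - 1 - t"]) auto
qed

lemma GGm_form: "G \<in> GGm m \<Longrightarrow> \<exists>h\<in>Gm m. \<forall>p. G p = (h (fst p), h (snd p))"
proof (induction rule: GGm.induct)
  case GGm_id thus ?case by (intro bexI[of _ id]) (auto intro: Gm.Gm_id)
next
  case (GGm_r1 g)
  then obtain h where "h \<in> Gm m" "\<forall>p. g p = (h (fst p), h (snd p))" by blast
  thus ?case by (intro bexI[of _ "(\<lambda>x. 1 - x) \<circ> h"]) (auto simp: Gm.Gm_r1 split: prod.splits)
next
  case (GGm_r2 g)
  then obtain h where "h \<in> Gm m" "\<forall>p. g p = (h (fst p), h (snd p))" by blast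
  thus ?case by (intro bexI[of _ "(\<lambda>x. 2 * real m - 1 - x) \<circ> h"]) (auto simp: Gm.Gm_r2 split: prod.splits)
qed

lemma orbit_self: "p \<in> pt_orbit m p"
  unfolding pt_orbit_def mem_Collect_eq by (rule bexI[of _ id]) (simp_all add: GGm.GGm_id)

lemma orbit_mem: "q \<in> pt_orbit m p \<Longrightarrow> \<exists>G\<in>GGm m. q = G p"
  unfolding pt_orbit_def by simp

lemma lp_inv: "lifted_pp m k S f \<Longrightarrow> h \<in> Gm m \<Longrightarrow> h ` (real_of_int ` S) \<subseteq> real_of_int ` S"
  unfolding lifted_pp_def by simp

lemma lp_eqv: "lifted_pp m k S f \<Longrightarrow> h \<in> Gm m \<Longrightarrow> i \<in> S \<Longrightarrow> j \<in> S \<Longrightarrow>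
   real_of_int j = h (real_of_int i) \<Longrightarrow> real_of_int (f j) = h (real_of_int (f i))"
  unfolding lifted_pp_def by simp

lemma orbit_diff: "q \<in> pt_orbit m p \<Longrightarrow> \<bar>fst q - snd q\<bar> = \<bar>fst p - snd p\<bar>"
proof -
  assume "q \<in> pt_orbit m p"
  then obtain G where G: "G \<in> GGm m" "q = G p" by (rule orbit_mem[THEN bexE])
  from GGm_form[OF G(1)] obtain h where h: "h \<in> Gm m" "\<forall>p. G p = (h (fst p), h (snd p))" by (rule bexE)
  from Gm_form[OF h(1)] obtain s t where st: "s = 1 \<or> s = -1" "\<forall>x. h x = s * x + t" by (elim exE conjE)
  have q1: "fst q = s * fst p + t" using G h st by simp
  have q2: "snd q = s * snd p + t" using G h st by simp
  have "fst q - snd q = s * (fst p - snd p)" unfolding q1 q2 by (simp add: right_diff_distrib)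
  thus ?thesis using st(1) by (metis abs_minus_cancel mult_1 mult_minus1)
qed

lemma hs_mem:
  assumes lp: "lifted_pp m k S f"
  shows "pt_orbit m (real_of_int a, real_of_int b) \<in> heegaard_state m S f \<longleftrightarrow> (a \<in> S \<and> b = f a)"
proof
  assume "pt_orbit m (real_of_int a, real_of_int b) \<in> heegaard_state m S f"
  hence "\<exists>i. pt_orbit m (real_of_int a, real_of_int b) = pt_orbit m (real_of_int i, real_of_int (f i)) \<and> i \<in> S"
    unfolding heegaard_state_def by simp
  then obtain i where i2: "pt_orbit m (real_of_int a, real_of_int b) = pt_orbit m (real_of_int i, real_of_int (f i))"
    and i1: "i \<in> S" by (elim exE conjE)
  have "(real_of_int a, real_of_int b) \<in> pt_orbit m (real_of_int i, real_of_int (f i))"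
    using orbit_self[of "(real_of_int a, real_of_int b)" m] unfolding i2 .
  then obtain G where G: "G \<in> GGm m" "(real_of_int a, real_of_int b) = G (real_of_int i, real_of_int (f i))"
    by (rule orbit_mem[THEN bexE])
  from GGm_form[OF G(1)] obtain h where h: "h \<in> Gm m" "\<forall>p. G p = (h (fst p), h (snd p))" by (rule bexE)
  have ha: "real_of_int a = h (real_of_int i)" and hb: "real_of_int b = h (real_of_int (f i))" using G h by auto
  have "h (real_of_int i) \<in> real_of_int ` S" using lp_inv[OF lp h(1)] i1 by (simp add: image_subset_iff)
  hence "real_of_int a \<in> real_of_int ` S" using ha by simp
  hence aS: "a \<in> S" by auto
  have "real_of_int (f a) = h (real_of_int (f i))" by (rule lp_eqv[OF lp h(1) i1 aS ha])
  hence "b = f a" using hb by simp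
  thus "a \<in> S \<and> b = f a" using aS by simp
next
  assume "a \<in> S \<and> b = f a"
  thus "pt_orbit m (real_of_int a, real_of_int b) \<in> heegaard_state m S f"
    unfolding heegaard_state_def mem_Collect_eq by (intro exI[of _ a]) auto
qed

lemma vanish:
  assumes fin: "finite {R \<in> regions m. \<phi> R \<noteq> 0}"
  shows "\<exists>N::int. \<forall>a b::int. N < \<bar>a - b\<bar> \<longrightarrow> \<phi> (pt_orbit m (real_of_int a + 1/2, real_of_int b + 1/2)) = 0"
proof -
  define Z where "Z = {R \<in> regions m. \<phi> R \<noteq> 0}"
  define \<delta> where "\<delta> R = \<bar>fst (SOME q. q \<in> R) - snd (SOME q. q \<in> R)\<bar>" for R :: "(real\<times>real) set"
  define N where "N = \<lceil>Max (insert 0 (\<delta> ` Z))\<rceil>"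
  have "\<phi> (pt_orbit m (real_of_int a + 1/2, real_of_int b + 1/2)) = 0" if "N < \<bar>a - b\<bar>" for a b
  proof (rule ccontr)
    let ?R = "pt_orbit m (real_of_int a + 1/2, real_of_int b + 1/2)"
    assume ne: "\<phi> ?R \<noteq> 0"
    have "?R \<in> regions m" unfolding regions_def mem_Collect_eq by (rule exI[of _ a], rule exI[of _ b]) simp
    hence RZ: "?R \<in> Z" using ne unfolding Z_def by simp
    have "(SOME q. q \<in> ?R) \<in> ?R" by (rule someI, rule orbit_self)
    hence "\<delta> ?R = \<bar>fst (real_of_int a + 1/2, real_of_int b + 1/2) - snd (real_of_int a + 1/2, real_of_int b + (1::real)/2)\<bar>"
      unfolding \<delta>_def by (rule orbit_diff)
    hence "\<delta> ?R = \<bar>real_of_int a - real_of_int b\<bar>" by simp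
    moreover have "\<delta> ?R \<le> Max (insert 0 (\<delta> ` Z))" using RZ fin Z_def by (intro Max_ge) auto
    moreover have "Max (insert 0 (\<delta> ` Z)) \<le> real_of_int N" unfolding N_def by (rule le_of_int_ceiling)
    ultimately have "real_of_int \<bar>a - b\<bar> \<le> real_of_int N" by simp
    hence "\<bar>a - b\<bar> \<le> N" by (simp only: of_int_le_iff)
    thus False using that by simp
  qed
  thus ?thesis by blast
qed

lemma bound:
  assumes lp: "lifted_pp m k S f" and k: "0 < k"
  shows "\<exists>B. \<forall>a\<in>S. \<bar>f a - a\<bar> \<le> B"
proof -
  define Ob where "Ob = int_orbit m ` S"
  have finO: "finite Ob" using lp k unfolding lifted_pp_def Ob_def by (metis card.infinite less_irrefl)
  define rep where "rep oo = (SOME r. r \<in> S \<and> int_orbit m r = oo)" for oo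
  define \<psi> where "\<psi> oo = \<bar>f (rep oo) - rep oo\<bar>" for oo
  define B where "B = Max (insert 0 (\<psi> ` Ob))"
  have "\<bar>f a - a\<bar> \<le> B" if aS: "a \<in> S" for a
  proof -
    let ?o = "int_orbit m a"
    have "\<exists>r. r \<in> S \<and> int_orbit m r = ?o" using aS by blast
    hence r: "rep ?o \<in> S" "int_orbit m (rep ?o) = ?o" unfolding rep_def by (metis (mono_tags, lifting) someI_ex)+
    have "a \<in> ?o" unfolding int_orbit_def mem_Collect_eq by (rule bexI[of _ id]) (simp_all add: Gm.Gm_id)
    hence "a \<in> int_orbit m (rep ?o)" using r by simp
    hence "\<exists>h\<in>Gm m. real_of_int a = h (real_of_int (rep ?o))" unfolding int_orbit_def by simp
    then obtain h where h: "h \<in> Gm m" "real_of_int a = h (real_of_int (rep ?o))" by (rule bexE)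
    have hf: "real_of_int (f a) = h (real_of_int (f (rep ?o)))" by (rule lp_eqv[OF lp h(1) r(1) aS h(2)])
    from Gm_form[OF h(1)] obtain s t where st: "s = 1 \<or> s = -1" "\<forall>x. h x = s * x + t" by (elim exE conjE)
    have e1: "real_of_int a = s * real_of_int (rep ?o) + t" using h(2) st(2) by simp
    have e2: "real_of_int (f a) = s * real_of_int (f (rep ?o)) + t" using hf st(2) by simp
    have "real_of_int (f a - a) = s * real_of_int (f (rep ?o) - rep ?o)" unfolding of_int_diff e1 e2 by (simp add: right_diff_distrib)
    hence "\<bar>real_of_int (f a - a)\<bar> = \<bar>real_of_int (f (rep ?o) - rep ?o)\<bar>" using st(1) by (metis abs_minus_cancel mult_1 mult_minus1)
    hence "\<bar>f a - a\<bar> = \<psi> ?o" unfolding \<psi>_def by (metis of_int_abs of_int_eq_iff)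
    moreover have "\<psi> ?o \<le> B" unfolding B_def using finO aS Ob_def by (intro Max_ge) auto
    ultimately show ?thesis by simp
  qed
  thus ?thesis by blast
qed

lemma const_int: fixes h :: "int \<Rightarrow> int" assumes "\<forall>a. h a = h (a - 1)" shows "h x = h y"
proof -
  have "h z = h 0" for z
  proof (induction z rule: int_induct[where k=0])
    case base show ?case by simp
  next case (step1 i) thus ?case using assms[rule_format, of "i+1"] by simp
  next case (step2 i) thus ?case using assms[rule_format, of i] by simp
  qed
  thus ?thesis by metis
qed

lemma tele_left: fixes D E :: "int \<Rightarrow> int"
  assumes "\<And>a. D a - D (a-1) = E a - E (a-1)" "\<And>a. a \<le> lo \<Longrightarrow> D a = E a"
  shows "D x = E x"
proof -
  have "(\<lambda>a. D a - E a) x = (\<lambda>a. D a - E a) lo"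
    by (rule const_int) (use assms(1) in \<open>auto simp: algebra_simps\<close>)
  thus ?thesis using assms(2)[of lo] by simp
qed

lemma tele_right: fixes D E :: "int \<Rightarrow> int"
  assumes "\<And>a. D a - D (a-1) = E a - E (a-1)" "\<And>a. a \<ge> lo \<Longrightarrow> D a = E a"
  shows "D x = E x"
proof -
  have "(\<lambda>a. D a - E a) x = (\<lambda>a. D a - E a) lo"
    by (rule const_int) (use assms(1) in \<open>auto simp: algebra_simps\<close>)
  thus ?thesis using assms(2)[of lo] by simp
qed

lemma card_le_step: fixes a :: int assumes "finite {i. i \<le> a - 1 \<and> P i}"
  shows "int (card {i. i \<le> a \<and> P i}) = int (card {i. i \<le> a - 1 \<and> P i}) + (if P a then 1 else 0)"
proof -
  have e: "{i. i \<le> a \<and> P i} = (if P a then insert a {i. i \<le> a - 1 \<and> P i} else {i. i \<le> a - 1 \<and> P i})" by (auto simp: less_le)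
  show ?thesis using assms by (simp add: e)
qed

lemma card_gt_step: fixes a :: int assumes "finite {i. i > a \<and> P i}"
  shows "int (card {i. i > a - 1 \<and> P i}) = int (card {i. i > a \<and> P i}) + (if P a then 1 else 0)"
proof -
  have e: "{i. i > a - 1 \<and> P i} = (if P a then insert a {i. i > a \<and> P i} else {i. i > a \<and> P i})" by (auto simp: less_le)
  show ?thesis using assms by (simp add: e)
qed


lemma abstract:
  fixes \<Phi> :: "int \<Rightarrow> int \<Rightarrow> int" and S T :: "int set" and f g :: "int \<Rightarrow> int" and N B c :: int
  assumes corner: "\<And>a b. \<Phi> (a-1) b + \<Phi> a (b-1) - \<Phi> a b - \<Phi> (a-1) (b-1)
        = (if a \<in> S \<and> b = f a then 1 else 0) - (if a \<in> T \<and> b = g a then 1 else 0)"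
    and van: "\<And>a b. N < \<bar>a - b\<bar> \<Longrightarrow> \<Phi> a b = 0"
    and bf: "\<And>a. a \<in> S \<Longrightarrow> \<bar>f a - a\<bar> \<le> B" and bg: "\<And>a. a \<in> T \<Longrightarrow> \<bar>g a - a\<bar> \<le> B"
  shows "S = T \<and> 2 * \<Phi> c c = int (card {i \<in> S. i \<le> c \<and> f i > c \<or> i > c \<and> f i \<le> c})
                              - int (card {i \<in> T. i \<le> c \<and> g i > c \<or> i > c \<and> g i \<le> c})"
proof -
  define F where "F a b = (if a \<in> S \<and> f a \<le> b then 1 else 0) - (if a \<in> T \<and> g a \<le> b then (1::int) else 0)" for a b
  have col: "\<Phi> a b - \<Phi> (a-1) b = - F a b" for a b
  proof (rule tele_left[where lo = "min (min (f a) (g a)) (a - N - 2) - 1", of "\<lambda>x. \<Phi> a x - \<Phi> (a-1) x" "\<lambda>x. - F a x"])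
    fix x
    show "\<Phi> a x - \<Phi> (a - 1) x - (\<Phi> a (x - 1) - \<Phi> (a - 1) (x - 1)) = - F a x - - F a (x - 1)"
      using corner[of a x] unfolding F_def by (auto split: if_splits)
  next
    fix x assume x: "x \<le> min (min (f a) (g a)) (a - N - 2) - 1"
    have "\<Phi> a x = 0" by (rule van) (use x in auto)
    moreover have "\<Phi> (a-1) x = 0" by (rule van) (use x in auto)
    moreover have "F a x = 0" using x unfolding F_def by auto
    ultimately show "\<Phi> a x - \<Phi> (a - 1) x = - F a x" by simp
  qed
  have ST: "S = T"
  proof (intro set_eqI)
    fix a
    define b where "b = max (max (f a) (g a)) (a + N + 2)"
    have "\<Phi> a b = 0" by (rule van) (use b_def in auto)
    moreover have "\<Phi> (a-1) b = 0" by (rule van) (use b_def in auto)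
    ultimately have "F a b = 0" using col[of a b] by simp
    thus "a \<in> S \<longleftrightarrow> a \<in> T" unfolding F_def b_def by (auto split: if_splits)
  qed
  have bg': "\<And>a. a \<in> S \<Longrightarrow> \<bar>g a - a\<bar> \<le> B" using bg ST by simp
  define Lf where "Lf a = int (card {i. i \<le> a \<and> (i \<in> S \<and> f i > c)})" for a
  define Lg where "Lg a = int (card {i. i \<le> a \<and> (i \<in> S \<and> g i > c)})" for a
  define Rf where "Rf a = int (card {i. i > a \<and> (i \<in> S \<and> f i \<le> c)})" for a
  define Rg where "Rg a = int (card {i. i > a \<and> (i \<in> S \<and> g i \<le> c)})" for a
  have finLf: "finite {i. i \<le> a \<and> (i \<in> S \<and> f i > c)}" for a
    by (rule finite_subset[of _ "{c + 1 - B..a}"]) (auto dest: bf simp: abs_le_iff)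
  have finLg: "finite {i. i \<le> a \<and> (i \<in> S \<and> g i > c)}" for a
    by (rule finite_subset[of _ "{c + 1 - B..a}"]) (auto dest: bg' simp: abs_le_iff)
  have finRf: "finite {i. i > a \<and> (i \<in> S \<and> f i \<le> c)}" for a
    by (rule finite_subset[of _ "{a..c + B}"]) (auto dest: bf simp: abs_le_iff)
  have finRg: "finite {i. i > a \<and> (i \<in> S \<and> g i \<le> c)}" for a
    by (rule finite_subset[of _ "{a..c + B}"]) (auto dest: bg' simp: abs_le_iff)
  have left: "\<Phi> a c = Lf a - Lg a" for a
  proof (rule tele_left[where lo = "min (c - N - 1) (c - B)", of "\<lambda>a. \<Phi> a c" "\<lambda>a. Lf a - Lg a"])
    fix x
    show "\<Phi> x c - \<Phi> (x - 1) c = Lf x - Lg x - (Lf (x - 1) - Lg (x - 1))"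
      using col[of x c] card_le_step[OF finLf, of x] card_le_step[OF finLg, of x]
      unfolding F_def Lf_def Lg_def using ST by (auto split: if_splits)
  next
    fix x assume x: "x \<le> min (c - N - 1) (c - B)"
    have "\<Phi> x c = 0" by (rule van) (use x in auto)
    moreover have e1: "{i. i \<le> x \<and> (i \<in> S \<and> f i > c)} = {}" using x bf by (force simp: abs_le_iff)
    moreover have e2: "{i. i \<le> x \<and> (i \<in> S \<and> g i > c)} = {}" using x bg' by (force simp: abs_le_iff)
    ultimately show "\<Phi> x c = Lf x - Lg x" unfolding Lf_def Lg_def e1 e2 by simp
  qed
  have right: "\<Phi> a c = Rf a - Rg a" for a
  proof (rule tele_right[where lo = "max (c + N + 1) (c + B)", of "\<lambda>a. \<Phi> a c" "\<lambda>a. Rf a - Rg a"])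
    fix x
    show "\<Phi> x c - \<Phi> (x - 1) c = Rf x - Rg x - (Rf (x - 1) - Rg (x - 1))"
      using col[of x c] card_gt_step[OF finRf, of x] card_gt_step[OF finRg, of x]
      unfolding F_def Rf_def Rg_def using ST by (auto split: if_splits)
  next
    fix x assume x: "x \<ge> max (c + N + 1) (c + B)"
    have "\<Phi> x c = 0" by (rule van) (use x in auto)
    moreover have e1: "{i. i > x \<and> (i \<in> S \<and> f i \<le> c)} = {}" using x bf by (force simp: abs_le_iff)
    moreover have e2: "{i. i > x \<and> (i \<in> S \<and> g i \<le> c)} = {}" using x bg' by (force simp: abs_le_iff)
    ultimately show "\<Phi> x c = Rf x - Rg x" unfolding Rf_def Rg_def e1 e2 by simp
  qed
  have cf: "int (card {i \<in> S. i \<le> c \<and> f i > c \<or> i > c \<and> f i \<le> c}) = Lf c + Rf c"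
  proof -
    have "{i \<in> S. i \<le> c \<and> f i > c \<or> i > c \<and> f i \<le> c} = {i. i \<le> c \<and> (i \<in> S \<and> f i > c)} \<union> {i. i > c \<and> (i \<in> S \<and> f i \<le> c)}" by auto
    thus ?thesis unfolding Lf_def Rf_def using finLf finRf by (simp add: card_Un_disjoint disjoint_iff)
  qed
  have cg: "int (card {i \<in> S. i \<le> c \<and> g i > c \<or> i > c \<and> g i \<le> c}) = Lg c + Rg c"
  proof -
    have "{i \<in> S. i \<le> c \<and> g i > c \<or> i > c \<and> g i \<le> c} = {i. i \<le> c \<and> (i \<in> S \<and> g i > c)} \<union> {i. i > c \<and> (i \<in> S \<and> g i \<le> c)}" by auto
    thus ?thesis unfolding Lg_def Rg_def using finLg finRg by (simp add: card_Un_disjoint disjoint_iff)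
  qed
  show ?thesis using left[of c] right[of c] cf cg ST by simp
qed


lemma half_lemmas:
  fixes x j :: int
  shows "(real_of_int x < real_of_int j - 1/2) = (x \<le> j - 1)"
    and "(real_of_int j - 1/2 < real_of_int x) = (x > j - 1)"
proof -
  have a: "(x \<le> j - 1) = (real_of_int x \<le> real_of_int j - 1)"
    by (metis of_int_1 of_int_diff of_int_le_iff)
  have b: "(x > j - 1) = (real_of_int x \<ge> real_of_int j)"
    by (metis of_int_le_iff zle_diff1_eq not_le)
  show "(real_of_int x < real_of_int j - 1/2) = (x \<le> j - 1)" using a b by linarith
  show "(real_of_int j - 1/2 < real_of_int x) = (x > j - 1)" using a b by linarith
qed

theorem mainTheorem5:
  fixes m k :: nat and S T :: "int set" and f g :: "int \<Rightarrow> int"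
    and \<phi> :: "(real \<times> real) set \<Rightarrow> int"
  assumes "0 < k" and "k < m"
    and "lifted_pp m k S f" and "lifted_pp m k T g"
    and "\<phi> \<in> domains m (heegaard_state m S f) (heegaard_state m T g)"
  shows "\<forall>i \<in> {1..m}. real_of_int (local_mult m \<phi> i) = weight S f (int i) - weight T g (int i)"
proof
  fix i assume "i \<in> {1..m}"
  define \<Phi> where "\<Phi> a b = \<phi> (pt_orbit m (real_of_int a + 1/2, real_of_int b + 1/2))" for a b
  have fin: "finite {R \<in> regions m. \<phi> R \<noteq> 0}" and cor: "\<forall>a b :: int.
        let P = pt_orbit m (real_of_int a, real_of_int b);
            A = \<phi> (pt_orbit m (real_of_int a + 1/2, real_of_int b + 1/2));
            D = \<phi> (pt_orbit m (real_of_int a - 1/2, real_of_int b - 1/2));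
            B = \<phi> (pt_orbit m (real_of_int a - 1/2, real_of_int b + 1/2));
            C = \<phi> (pt_orbit m (real_of_int a + 1/2, real_of_int b - 1/2))
        in (if P \<in> heegaard_state m S f - heegaard_state m T g then B + C = A + D + 1
            else if P \<in> heegaard_state m T g - heegaard_state m S f then B + C = A + D - 1
            else A + D = B + C)"
    using assms(5) unfolding domains_def mem_Collect_eq by blast+
  have corner: "\<Phi> (a-1) b + \<Phi> a (b-1) - \<Phi> a b - \<Phi> (a-1) (b-1)
        = (if a \<in> S \<and> b = f a then 1 else 0) - (if a \<in> T \<and> b = g a then 1 else 0)" for a b
  proof -
    have ea: "real_of_int a - 1/2 = real_of_int (a-1) + 1/2" by simp
    have eb: "real_of_int b - 1/2 = real_of_int (b-1) + 1/2" by simp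
    have mx: "pt_orbit m (real_of_int a, real_of_int b) \<in> heegaard_state m S f \<longleftrightarrow> (a \<in> S \<and> b = f a)"
      by (rule hs_mem[OF assms(3)])
    have my: "pt_orbit m (real_of_int a, real_of_int b) \<in> heegaard_state m T g \<longleftrightarrow> (a \<in> T \<and> b = g a)"
      by (rule hs_mem[OF assms(4)])
    have inst: "if pt_orbit m (real_of_int a, real_of_int b) \<in> heegaard_state m S f - heegaard_state m T g
          then \<Phi> (a-1) b + \<Phi> a (b-1) = \<Phi> a b + \<Phi> (a-1) (b-1) + 1
          else if pt_orbit m (real_of_int a, real_of_int b) \<in> heegaard_state m T g - heegaard_state m S f
          then \<Phi> (a-1) b + \<Phi> a (b-1) = \<Phi> a b + \<Phi> (a-1) (b-1) - 1
          else \<Phi> a b + \<Phi> (a-1) (b-1) = \<Phi> (a-1) b + \<Phi> a (b-1)"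
      using cor[rule_format, of a b] unfolding Let_def \<Phi>_def ea eb .
    define X where "X \<longleftrightarrow> (a \<in> S \<and> b = f a)"
    define Y where "Y \<longleftrightarrow> (a \<in> T \<and> b = g a)"
    have inst': "if X \<and> \<not> Y
          then \<Phi> (a-1) b + \<Phi> a (b-1) = \<Phi> a b + \<Phi> (a-1) (b-1) + 1
          else if Y \<and> \<not> X
          then \<Phi> (a-1) b + \<Phi> a (b-1) = \<Phi> a b + \<Phi> (a-1) (b-1) - 1
          else \<Phi> a b + \<Phi> (a-1) (b-1) = \<Phi> (a-1) b + \<Phi> a (b-1)"
      using inst unfolding Diff_iff mx my X_def Y_def .
    show ?thesis unfolding X_def[symmetric] Y_def[symmetric] using inst'
      by (cases X; cases Y) simp_all
  qed
  obtain N where van: "\<And>a b. N < \<bar>a - b\<bar> \<Longrightarrow> \<Phi> a b = 0"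
    using vanish[OF fin] unfolding \<Phi>_def by blast
  obtain B1 where b1: "\<forall>a\<in>S. \<bar>f a - a\<bar> \<le> B1" using bound[OF assms(3) assms(1)] by blast
  obtain B2 where b2: "\<forall>a\<in>T. \<bar>g a - a\<bar> \<le> B2" using bound[OF assms(4) assms(1)] by blast
  have bf: "\<And>a. a \<in> S \<Longrightarrow> \<bar>f a - a\<bar> \<le> max B1 B2" using b1 by force
  have bg: "\<And>a. a \<in> T \<Longrightarrow> \<bar>g a - a\<bar> \<le> max B1 B2" using b2 by force
  define c where "c = int i - 1"
  have res: "S = T \<and> 2 * \<Phi> c c = int (card {i \<in> S. i \<le> c \<and> f i > c \<or> i > c \<and> f i \<le> c})
                              - int (card {i \<in> T. i \<le> c \<and> g i > c \<or> i > c \<and> g i \<le> c})"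
    by (rule abstract[OF corner van bf bg])
  have lm: "local_mult m \<phi> i = \<Phi> c c"
  proof -
    have e: "real i - 1/2 = real_of_int c + 1/2" unfolding c_def by simp
    show ?thesis unfolding local_mult_def \<Phi>_def e by (rule refl)
  qed
  have w: "weight U h (int i) = 1/2 * real (card {x \<in> U. x \<le> c \<and> h x > c \<or> x > c \<and> h x \<le> c})"
    for U :: "int set" and h :: "int \<Rightarrow> int"
  proof -
    have "{x \<in> U. (real_of_int x < real_of_int (int i) - 1/2 \<and> real_of_int (int i) - 1/2 < real_of_int (h x)) \<or>
      (real_of_int x > real_of_int (int i) - 1/2 \<and> real_of_int (int i) - 1/2 > real_of_int (h x))}
      = {x \<in> U. x \<le> c \<and> h x > c \<or> x > c \<and> h x \<le> c}"
      unfolding c_def half_lemmas not_less[symmetric] by simp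
    thus ?thesis unfolding weight_def by simp
  qed
  let ?Af = "{i \<in> S. i \<le> c \<and> f i > c \<or> i > c \<and> f i \<le> c}"
  let ?Ag = "{i \<in> T. i \<le> c \<and> g i > c \<or> i > c \<and> g i \<le> c}"
  have h2: "2 * \<Phi> c c = int (card ?Af) - int (card ?Ag)" using res by (rule conjunct2)
  have "real_of_int (2 * \<Phi> c c) = real (card ?Af) - real (card ?Ag)" unfolding h2 by simp
  hence "real_of_int (\<Phi> c c) = 1/2 * real (card ?Af) - 1/2 * real (card ?Ag)" by simp
  thus "real_of_int (local_mult m \<phi> i) = weight S f (int i) - weight T g (int i)"
    unfolding lm w .
qed

end
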